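(* Let $U$ be a finite nonempty set, $R$ an equivalence relation on $U$, and $M(R)$ the support matroid induced by $R$, with rank function $r_{(R)}$. Then for every $X\subseteq U$, $$r_{(R)}(X)=|\{RN(x)\mid x\in U,\ RN(x)\cap X\neq\emptyset\}|,$$ i.e. the number of equivalence classes of $R$ meeting $X$.
   Context: For $x\in U$, $RN(x)=\{y\in U\mid xRy\}$; $R^{*}(X)=\{x\in U\mid RN(x)\cap X\neq\emptyset\}$. Let $\mathbf{S}(R)=\{X\subseteq U\mid R^{*}(X)=U\}$. The support matroid $M(R)=(U,\mathbf{I}(R))$ is the matroid on $U$ whose independent sets $\mathbf{I}(R)$ are the subsets of inclusion-minimal members of $\mathbf{S}(R)$. The rank function of a matroid $(U,\mathbf{I})$ is $r(X)=\max\{|I|\mid I\subseteq X,\ I\in\mathbf{I}\}$. *)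

theory Defs
  imports Main
begin

definition RN :: "'a set \<Rightarrow> 'a rel \<Rightarrow> 'a \<Rightarrow> 'a set" where
  "RN U R x = {y \<in> U. (x, y) \<in> R}"

definition Rstar :: "'a set \<Rightarrow> 'a rel \<Rightarrow> 'a set \<Rightarrow> 'a set" where
  "Rstar U R X = {x \<in> U. RN U R x \<inter> X \<noteq> {}}"

definition supp_sets :: "'a set \<Rightarrow> 'a rel \<Rightarrow> 'a set set" where
  "supp_sets U R = {X. X \<subseteq> U \<and> Rstar U R X = U}"

definition min_supp_sets :: "'a set \<Rightarrow> 'a rel \<Rightarrow> 'a set set" where
  "min_supp_sets U R =
     {X \<in> supp_sets U R. \<forall>Y \<in> supp_sets U R. Y \<subseteq> X \<longrightarrow> Y = X}"

definition supp_indep :: "'a set \<Rightarrow> 'a rel \<Rightarrow> 'a set set" where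
  "supp_indep U R = {I. \<exists>X \<in> min_supp_sets U R. I \<subseteq> X}"

definition supp_rank :: "'a set \<Rightarrow> 'a rel \<Rightarrow> 'a set \<Rightarrow> nat" where
  "supp_rank U R X = Max {card I | I. I \<subseteq> X \<and> I \<in> supp_indep U R}"

end

theory Submission
  imports Defs
begin

lemma RN_eq: "equiv U R \<Longrightarrow> RN U R x = R``{x}"
  unfolding RN_def equiv_def refl_on_def by auto

lemma supp_iff:
  assumes "equiv U R"
  shows "X \<in> supp_sets U R \<longleftrightarrow> X \<subseteq> U \<and> (\<forall>x\<in>U. \<exists>y\<in>X. (x,y)\<in>R)"
  using assms unfolding supp_sets_def Rstar_def RN_eq[OF assms] by blast

lemma min_P:
  assumes e: "equiv U R" and T: "T \<in> min_supp_sets U R" and a: "a \<in> T" and b: "b \<in> T"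
    and ab: "(a,b) \<in> R"
  shows "a = b"
proof (rule ccontr)
  assume ne: "a \<noteq> b"
  have TS: "T \<in> supp_sets U R" using T unfolding min_supp_sets_def by auto
  have "T - {b} \<in> supp_sets U R"
  proof -
    have "T - {b} \<subseteq> U" using TS supp_iff[OF e] by auto
    moreover have "\<forall>x\<in>U. \<exists>y\<in>T - {b}. (x, y) \<in> R"
    proof
      fix x assume x: "x \<in> U"
      then obtain y where y: "y \<in> T" "(x,y) \<in> R" using TS supp_iff[OF e] by auto
      show "\<exists>y\<in>T - {b}. (x, y) \<in> R"
      proof (cases "y = b")
        case True
        have "(x,a) \<in> R" using y ab True e unfolding equiv_def sym_def trans_def by metis
        then show ?thesis using a ne by auto
      qed (use y in auto)
    qed
    ultimately show ?thesis using supp_iff[OF e] by blast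
  qed
  then have "T - {b} = T" using T unfolding min_supp_sets_def by auto
  then show False using b by auto
qed

lemma P_min:
  assumes e: "equiv U R" and TS: "T \<in> supp_sets U R"
    and P: "\<forall>a\<in>T. \<forall>b\<in>T. (a,b) \<in> R \<longrightarrow> a = b"
  shows "T \<in> min_supp_sets U R"
  unfolding min_supp_sets_def
proof (safe intro!: TS)
  fix Y t assume Y: "Y \<in> supp_sets U R" "Y \<subseteq> T" and t: "t \<in> T"
  have "t \<in> U" using TS t supp_iff[OF e] by auto
  then obtain y where "y \<in> Y" "(t,y) \<in> R" using Y supp_iff[OF e] by auto
  then show "t \<in> Y" using P t Y by auto
qed

theorem proposition6:
  fixes U :: "'a set" and R :: "'a rel" and X :: "'a set"
  assumes "finite U" and "U \<noteq> {}" and "equiv U R" and "X \<subseteq> U"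
  shows "supp_rank U R X = card {RN U R x | x. x \<in> U \<and> RN U R x \<inter> X \<noteq> {}}"
proof -
  note e = assms(3)
  have RU: "R \<subseteq> U \<times> U" using e unfolding equiv_def refl_on_def by auto
  have refl: "x \<in> U \<Longrightarrow> (x,x) \<in> R" for x using e unfolding equiv_def refl_on_def by auto
  have symm: "(x,y) \<in> R \<Longrightarrow> (y,x) \<in> R" for x y using e unfolding equiv_def sym_def by auto
  have tr: "(x,y) \<in> R \<Longrightarrow> (y,z) \<in> R \<Longrightarrow> (x,z) \<in> R" for x y z
    using e unfolding equiv_def trans_def by blast
  define C where "C = {RN U R x | x. x \<in> U \<and> RN U R x \<inter> X \<noteq> {}}"
  define S where "S = {card I | I. I \<subseteq> X \<and> I \<in> supp_indep U R}"
  have finC: "finite C"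
  proof -
    have "C \<subseteq> Pow U" unfolding C_def RN_def by auto
    then show ?thesis using assms(1) finite_subset by blast
  qed
  have finS: "finite S"
  proof -
    have "S \<subseteq> {..card U}" unfolding S_def
      using card_mono[OF assms(1)] assms(4) by fastforce
    then show ?thesis using finite_subset by blast
  qed
  define pick where "pick x = (if R``{x} \<inter> X \<noteq> {} then (SOME y. y \<in> R``{x} \<inter> X)
      else (SOME y. y \<in> R``{x}))" for x
  have pick_in: "x \<in> U \<Longrightarrow> pick x \<in> R``{x}" for x
  proof -
    assume x: "x \<in> U"
    show ?thesis
    proof (cases "R``{x} \<inter> X \<noteq> {}")
      case True
      then have "\<exists>y. y \<in> R``{x} \<inter> X" by blast
      then have "(SOME y. y \<in> R``{x} \<inter> X) \<in> R``{x} \<inter> X" by (rule someI_ex)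
      then show ?thesis using True unfolding pick_def by simp
    next
      case False
      have "x \<in> R``{x}" using refl x by simp
      then have "(SOME y. y \<in> R``{x}) \<in> R``{x}" by (rule someI)
      then show ?thesis using False unfolding pick_def by simp
    qed
  qed
  have pickX: "R``{x} \<inter> X \<noteq> {} \<Longrightarrow> pick x \<in> X" for x
  proof -
    assume h: "R``{x} \<inter> X \<noteq> {}"
    then have "\<exists>y. y \<in> R``{x} \<inter> X" by blast
    then have "(SOME y. y \<in> R``{x} \<inter> X) \<in> R``{x} \<inter> X" by (rule someI_ex)
    then show ?thesis using h unfolding pick_def by simp
  qed
  have pick_cong: "(a,b) \<in> R \<Longrightarrow> pick a = pick b" for a b
    using equiv_class_eq[OF e] unfolding pick_def by simp
  define T where "T = pick ` U"
  have TU: "T \<subseteq> U" unfolding T_def using pick_in RU by auto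
  have TS: "T \<in> supp_sets U R" unfolding supp_iff[OF e] T_def using TU T_def pick_in by auto
  have TP: "\<forall>a\<in>T. \<forall>b\<in>T. (a,b) \<in> R \<longrightarrow> a = b"
  proof (intro ballI impI)
    fix a b assume "a \<in> T" "b \<in> T" "(a,b) \<in> R"
    then obtain x y where xy: "x \<in> U" "y \<in> U" "a = pick x" "b = pick y" unfolding T_def by auto
    have "(x,y) \<in> R" using pick_in[OF xy(1)] pick_in[OF xy(2)] xy \<open>(a,b)\<in>R\<close> tr symm by blast
    then show "a = b" using pick_cong xy by simp
  qed
  have Tmin: "T \<in> min_supp_sets U R" using P_min[OF e TS TP] .
  have "T \<inter> X \<in> supp_indep U R" unfolding supp_indep_def using Tmin by auto
  then have inS: "card (T \<inter> X) \<in> S" unfolding S_def by auto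
  have "C \<subseteq> RN U R ` (T \<inter> X)"
  proof
    fix c assume "c \<in> C"
    then obtain x where x: "x \<in> U" "c = R``{x}" "R``{x} \<inter> X \<noteq> {}"
      unfolding C_def RN_eq[OF e] by auto
    have "pick x \<in> T \<inter> X" using x pickX T_def by auto
    moreover have "RN U R (pick x) = c" using RN_eq[OF e] x pick_in equiv_class_eq[OF e]
      by (metis Image_singleton_iff)
    ultimately show "c \<in> RN U R ` (T \<inter> X)" by auto
  qed
  moreover have finTX: "finite (T \<inter> X)" using TU assms(1) finite_subset by blast
  ultimately have "card C \<le> card (RN U R ` (T \<inter> X))"
    by (intro card_mono) auto
  also have "\<dots> \<le> card (T \<inter> X)" by (rule card_image_le[OF finTX])
  finally have ge: "card C \<le> Max S" using Max_ge[OF finS inS] by linarith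
  have le: "\<forall>s\<in>S. s \<le> card C"
  proof
    fix s assume "s \<in> S"
    then obtain I where I: "s = card I" "I \<subseteq> X" "I \<in> supp_indep U R" unfolding S_def by auto
    then obtain T' where T': "T' \<in> min_supp_sets U R" "I \<subseteq> T'" unfolding supp_indep_def by auto
    have inj: "inj_on (RN U R) I"
    proof
      fix a b assume ab: "a \<in> I" "b \<in> I" "RN U R a = RN U R b"
      have "b \<in> U" using ab I assms(4) by auto
      then have "b \<in> RN U R a" using ab refl RN_eq[OF e] by auto
      then have "(a,b) \<in> R" using RN_eq[OF e] by auto
      then show "a = b" using min_P[OF e T'(1)] ab T' by auto
    qed
    have "RN U R ` I \<subseteq> C" unfolding C_def using I assms(4) refl RN_eq[OF e] by fastforce
    then have "card (RN U R ` I) \<le> card C" using finC card_mono by blast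
    then show "s \<le> card C" using card_image[OF inj] I by simp
  qed
  have "S \<noteq> {}" using inS by auto
  then have "Max S \<le> card C" using le finS by simp
  with ge show ?thesis unfolding supp_rank_def S_def[symmetric] C_def[symmetric] by simp
qed

end
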